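(* In the high-dimensional setting below, assume $\epsilon_{I,j}\ne0$ for all $j$, that for some $c>1$ $$\lambda\gamma\ge\frac{c+1}{c-1}\max_{j\in[p]}\frac{\|(X^{(n)}_{I,j^c})^\top\epsilon_{I,j}\|_\infty}{\|\epsilon_{I,j}\|_2}\quad\text{and}\quad\lambda\ge\frac{c+1}{c-1}\max_{i\in[n]}\Big(\sum_{j\in[p]}\frac{\epsilon_{ij}^2}{\|\epsilon_{I,j}\|_2^2}\Big)^{1/2},$$ and that there is $V\in\mathbb R^{n\times p}$ with $\|V_{i,\bullet}\|_2\le1$ for all $i$ such that for every $j\in[p]$ $$\|M\widehat\Delta_{\bullet,j}\|_2^2\le-2\bar\xi_{\bullet,j}^\top M\widehat\Delta_{\bullet,j}-2\lambda\|\bar\xi_{\bullet,j}\|_2V_{\bullet,j}^\top\widehat\Delta^\Theta_{\bullet,j}+2\lambda\gamma\|\bar\xi_{\bullet,j}\|_2\big(\|B^*_{j^c,j}\|_1-\|\widehat B_{j^c,j}\|_1\big)+\lambda^2\big(\gamma\|\widehat\Delta^B_{\bullet,j}\|_1+|V_{\bullet,j}^\top\widehat\Delta^\Theta_{\bullet,j}|\big)^2.$$ Then $$\|M\widehat\Delta\|_F^2\le4\lambda c\|\xi_{I,\bullet}^\top\|_{2,\infty}\big(\gamma\|\widehat\Delta^B_{\mathcal J}\|_{1,1}+\|\widehat\Delta^\Theta_{O,\bullet}\|_{2,1}\big)+\lambda^2(1+c)^2\big(\gamma\|\widehat\Delta^B_{\mathcal J}\|_{1,1}+\|\widehat\Del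ta^\Theta_{O,\bullet}\|_{2,1}\big)^2.$$
   Context: High-dimensional setting. Let $n,p\ge1$, $[n]=\{1,\dots,n\}$. $X=Y+E^*\in\mathbb R^{n\times p}$ where (C1) the rows of $Y$ are independent $\mathcal N_p(\mu^*,\Sigma^* )$, $\Sigma^*$ positive definite; (C2) $E^*$ is deterministic, $[n]=I\cup O$ a partition with the rows of $E^*$ indexed by $I$ equal to zero, and every row of $E^*(\Sigma^* )^{-1/2}$ of Euclidean norm at most $M_E\sqrt p$; $\mu^*=0$. $\Omega^*=(\Sigma^* )^{-1}$ with diagonal entries $\omega^*_{jj}$, $B^*=\Omega^*\mathrm{diag}(\Omega^* )^{-1}$, $X^{(n)}=X/\sqrt n$, $\Theta^*=E^*B^*/\sqrt n$, $\xi=X^{(n)}B^*-\Theta^*$, $\epsilon_{ij}=\sqrt n(\omega^*_{jj})^{1/2}\xi_{ij}$. Notation: $A_{i,\bullet}$, $A_{\bullet,j}$ rows/columns, $A_{K,J}$ submatrices, $j^c=[p]\setminus\{j\}$, $\|A\|_{q_1,q_2}=(\sum_i\|A_{i,\bullet}\|_{q_1}^{q_2})^{1/q_2}$, $\|A^\top\|_{2,1}=\sum_j\|A_{\bullet,j}\|_2$, $\|A^\top\|_{2,\infty}=\max_j\|A_{\bullet,j}\|_2$, $\|A\|_F=\|A\|_{2,2}$. Estimator: for $\lambda,\gamma\ge0$, $(\widehat B,\widehat\Theta)$ minimizes $F(B,\Theta)=\|(X^{(n)}B-\Theta)^\top\|_{2,1}+\lambda(\|\Theta\|_{2,1}+\gamma\|B\|_{1,1})$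 over $B\in\mathbb R^{p\times p}$ with all $B_{jj}=1$ and $\Theta\in\mathbb R^{n\times p}$. Let $\mathcal J=\{J_j:j\in[p]\}$, $J_j\subset[p]$, with $B^*_{i,j}=0$ whenever $i\notin J_j$; for a $p\times p$ matrix $A$, $A_{\mathcal J}$ zeroes entries $A_{i,j}$ with $i\notin J_j$. $\xi_O$ is the $n\times p$ matrix equal to $\xi$ on rows indexed by $O$ and zero elsewhere; $\bar\xi=\xi-\xi_O$; $\bar\Theta^*=\Theta^*+\xi_O$. $\widehat\Delta^B=\widehat B-B^*$, $\widehat\Delta^\Theta=\widehat\Theta-\bar\Theta^*$, $\widehat\Delta\in\mathbb R^{(p+n)\times p}$ stacks $\widehat\Delta^B$ above $\widehat\Delta^\Theta$; $M=[X^{(n)},\,-I_n]\in\mathbb R^{n\times(p+n)}$. *)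

theory Defs
  imports "HOL-Analysis.Analysis"
begin

text \<open>Matrices are rendered with finite index types: an n x p matrix is
  real^'p^'n, rows indexed by 'n (so n = CARD('n)), columns by 'p (p = CARD('p)).\<close>

definition pos_def_mat :: "real^'p^'p \<Rightarrow> bool" where
  "pos_def_mat S \<longleftrightarrow> transpose S = S \<and> (\<forall>x. x \<noteq> 0 \<longrightarrow> x \<bullet> (S *v x) > 0)"

definition is_inv_sqrt :: "real^'p^'p \<Rightarrow> real^'p^'p \<Rightarrow> bool" where
  "is_inv_sqrt R S \<longleftrightarrow> pos_def_mat R \<and> R ** R = matrix_inv S"

definition Bstar :: "real^'p^'p \<Rightarrow> real^'p^'p" where
  "Bstar S = (\<chi> i j. matrix_inv S $ i $ j / matrix_inv S $ j $ j)"

definition Xn :: "real^'p^'n \<Rightarrow> real^'p^'n" where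
  "Xn X = (1 / sqrt (real CARD('n))) *\<^sub>R X"

definition Theta_star :: "real^'p^'n \<Rightarrow> real^'p^'p \<Rightarrow> real^'p^'n" where
  "Theta_star E S = (1 / sqrt (real CARD('n))) *\<^sub>R (E ** Bstar S)"

definition xi :: "real^'p^'n \<Rightarrow> real^'p^'n \<Rightarrow> real^'p^'p \<Rightarrow> real^'p^'n" where
  "xi X E S = Xn X ** Bstar S - Theta_star E S"

definition eps :: "real^'p^'n \<Rightarrow> real^'p^'n \<Rightarrow> real^'p^'p \<Rightarrow> real^'p^'n" where
  "eps X E S = (\<chi> i j. sqrt (real CARD('n)) * sqrt (matrix_inv S $ j $ j) * xi X E S $ i $ j)"

definition rows_on :: "'n set \<Rightarrow> real^'p^'n \<Rightarrow> real^'p^'n" where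
  "rows_on K A = (\<chi> i j. if i \<in> K then A $ i $ j else 0)"

text \<open>M = [X^(n), -I_n], an n x (p+n) matrix.\<close>
definition Mmat :: "real^'p^'n \<Rightarrow> real^('p + 'n)^'n" where
  "Mmat A = (\<chi> i k. case k of Inl l \<Rightarrow> A $ i $ l | Inr l \<Rightarrow> (if l = i then -1 else 0))"

definition stack :: "real^'p^'p \<Rightarrow> real^'p^'n \<Rightarrow> real^'p^('p + 'n)" where
  "stack DB DT = (\<chi> k j. case k of Inl l \<Rightarrow> DB $ l $ j | Inr l \<Rightarrow> DT $ l $ j)"

definition Fobj :: "real^'p^'n \<Rightarrow> real \<Rightarrow> real \<Rightarrow> real^'p^'p \<Rightarrow> real^'p^'n \<Rightarrow> real" where
  "Fobj X lam gam B T =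
     (\<Sum>j\<in>UNIV. norm (column j (Xn X ** B - T)))
     + lam * ((\<Sum>i\<in>UNIV. norm (T $ i)) + gam * (\<Sum>i\<in>UNIV. \<Sum>j\<in>UNIV. \<bar>B $ i $ j\<bar>))"

definition frob :: "real^'b^'a \<Rightarrow> real" where
  "frob A = sqrt (\<Sum>i\<in>UNIV. \<Sum>j\<in>UNIV. (A $ i $ j)\<^sup>2)"

end

theory Submission
  imports Defs
begin
lemma L2_sq: "(L2_set f A)\<^sup>2 = (\<Sum>i\<in>A. (f i)\<^sup>2)"
  unfolding L2_set_def by (simp add: sum_nonneg)

lemma sum_sq_le_sq_sum:
  fixes f :: "'a \<Rightarrow> real"
  assumes "\<And>i. i \<in> A \<Longrightarrow> 0 \<le> f i"
  shows "(\<Sum>i\<in>A. (f i)\<^sup>2) \<le> (sum f A)\<^sup>2"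
proof -
  have "L2_set f A \<le> sum f A" by (rule L2_set_le_sum) (use assms in auto)
  hence "(L2_set f A)\<^sup>2 \<le> (sum f A)\<^sup>2" by (intro power_mono) auto
  thus ?thesis by (simp add: L2_sq)
qed

lemma inner_le_L2: "(\<Sum>i\<in>A. f i * g i) \<le> L2_set f A * L2_set g A"
proof -
  have "(\<Sum>i\<in>A. f i * g i) \<le> (\<Sum>i\<in>A. \<bar>f i\<bar> * \<bar>g i\<bar>)"
    by (rule sum_mono) (metis abs_ge_self abs_mult)
  also have "\<dots> \<le> L2_set f A * L2_set g A" by (rule L2_set_mult_ineq)
  finally show ?thesis .
qed

lemma abs_inner_le_L2: "\<bar>\<Sum>i\<in>A. f i * g i\<bar> \<le> L2_set f A * L2_set g A"
proof -
  have "\<bar>\<Sum>i\<in>A. f i * g i\<bar> \<le> (\<Sum>i\<in>A. \<bar>f i * g i\<bar>)" by (rule sum_abs)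
  also have "\<dots> \<le> L2_set f A * L2_set g A" using L2_set_mult_ineq[of f g A] by (simp add: abs_mult)
  finally show ?thesis .
qed

lemma splitU:
  fixes f :: "'a::finite \<Rightarrow> 'b::comm_monoid_add"
  assumes "I \<union> O' = UNIV" "I \<inter> O' = {}"
  shows "sum f UNIV = sum f I + sum f O'"
  using sum.union_disjoint[of I O' f] assms by simp

lemma abstract_main:
  fixes Xs :: "'n::finite \<Rightarrow> 'p::finite \<Rightarrow> real"
    and Bh Bs :: "'p \<Rightarrow> 'p \<Rightarrow> real"
    and Th Tb xb V md :: "'n \<Rightarrow> 'p \<Rightarrow> real"
    and Iset Oset :: "'n set" and J :: "'p \<Rightarrow> 'p set"
    and lam gam c k A :: real and a :: "'p \<Rightarrow> real"
  assumes part: "Iset \<union> Oset = UNIV" "Iset \<inter> Oset = {}"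
    and xbO: "\<And>i j. i \<in> Oset \<Longrightarrow> xb i j = 0"
    and TbI: "\<And>i j. i \<in> Iset \<Longrightarrow> Tb i j = 0"
    and diag: "\<And>j. Bh j j = 1" "\<And>j. Bs j j = 1"
    and supp: "\<And>i j. i \<notin> J j \<Longrightarrow> Bs i j = 0"
    and a_def: "\<And>j. a j = L2_set (\<lambda>i. xb i j) UNIV"
    and apos: "\<And>j. a j > 0"
    and aA: "\<And>j. a j \<le> A"
    and c1: "c > 1" and k_def: "k = (c - 1) / (c + 1)"
    and lam0: "lam \<ge> 0" and gam0: "gam \<ge> 0"
    and hA: "\<And>j l. l \<noteq> j \<Longrightarrow> \<bar>\<Sum>i\<in>UNIV. xb i j * Xs i l\<bar> \<le> k * lam * gam * a j"
    and hB: "\<And>i. L2_set (\<lambda>j. xb i j / a j) UNIV \<le> k * lam"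
    and md_def: "\<And>i j. md i j = (\<Sum>l\<in>UNIV. Xs i l * (Bh l j - Bs l j)) - (Th i j - Tb i j)"
    and minim: "(\<Sum>j\<in>UNIV. L2_set (\<lambda>i. xb i j + md i j) UNIV)
       + lam * ((\<Sum>i\<in>UNIV. L2_set (Th i) UNIV) + gam * (\<Sum>i\<in>UNIV. \<Sum>j\<in>UNIV. \<bar>Bh i j\<bar>))
      \<le> (\<Sum>j\<in>UNIV. a j)
       + lam * ((\<Sum>i\<in>UNIV. L2_set (Tb i) UNIV) + gam * (\<Sum>i\<in>UNIV. \<Sum>j\<in>UNIV. \<bar>Bs i j\<bar>))"
    and Vrows: "\<And>i. L2_set (V i) UNIV \<le> 1"
    and Vineq: "\<And>j. (L2_set (\<lambda>i. md i j) UNIV)\<^sup>2 \<le>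
        - 2 * (\<Sum>i\<in>UNIV. xb i j * md i j)
        - 2 * lam * a j * (\<Sum>i\<in>UNIV. V i j * (Th i j - Tb i j))
        + 2 * lam * gam * a j * ((\<Sum>i\<in>UNIV - {j}. \<bar>Bs i j\<bar>) - (\<Sum>i\<in>UNIV - {j}. \<bar>Bh i j\<bar>))
        + lam\<^sup>2 * (gam * (\<Sum>i\<in>UNIV. \<bar>Bh i j - Bs i j\<bar>) + \<bar>\<Sum>i\<in>UNIV. V i j * (Th i j - Tb i j)\<bar>)\<^sup>2"
  shows "(\<Sum>j\<in>UNIV. (L2_set (\<lambda>i. md i j) UNIV)\<^sup>2)
     \<le> 4 * lam * c * A * (gam * (\<Sum>j\<in>UNIV. \<Sum>i\<in>J j. \<bar>Bh i j - Bs i j\<bar>) + (\<Sum>i\<in>Oset. L2_set (\<lambda>j. Th i j - Tb i j) UNIV))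
       + lam\<^sup>2 * (1 + c)\<^sup>2 * (gam * (\<Sum>j\<in>UNIV. \<Sum>i\<in>J j. \<bar>Bh i j - Bs i j\<bar>) + (\<Sum>i\<in>Oset. L2_set (\<lambda>j. Th i j - Tb i j) UNIV))\<^sup>2"
proof -
  define dB where "dB i j = Bh i j - Bs i j" for i j
  define dT where "dT i j = Th i j - Tb i j" for i j
  define D where "D j = (\<Sum>i\<in>UNIV. \<bar>dB i j\<bar>)" for j
  define Dall where "Dall = (\<Sum>j\<in>UNIV. D j)"
  define DJ where "DJ = (\<Sum>j\<in>UNIV. \<Sum>i\<in>J j. \<bar>dB i j\<bar>)"
  define DJc where "DJc = (\<Sum>j\<in>UNIV. \<Sum>i\<in>UNIV - J j. \<bar>dB i j\<bar>)"
  define Lr where "Lr i = L2_set (dT i) UNIV" for i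
  define DI where "DI = (\<Sum>i\<in>Iset. Lr i)"
  define DO where "DO = (\<Sum>i\<in>Oset. Lr i)"
  define Tn where "Tn = gam * Dall + DI + DO"
  define S where "S = gam * DJ + DO"
  have k0: "0 < k" "k < 1" using c1 by (auto simp: k_def field_simps)
  have a0: "\<And>j. 0 \<le> a j" using apos less_imp_le by blast
  have A0: "0 \<le> A" using a0 aA order_trans by blast
  have dBjj: "\<And>j. dB j j = 0" by (simp add: dB_def diag)
  have D0: "\<And>j. 0 \<le> D j" by (simp add: D_def sum_nonneg)
  have Lr0: "\<And>i. 0 \<le> Lr i" by (simp add: Lr_def)
  have DI0: "0 \<le> DI" and DO0: "0 \<le> DO" by (simp_all add: DI_def DO_def sum_nonneg Lr0)
  have Dall0: "0 \<le> Dall" by (simp add: Dall_def sum_nonneg D0)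
  have LrU: "(\<Sum>i\<in>UNIV. Lr i) = DI + DO"
    unfolding DI_def DO_def by (rule splitU[OF part])
  have Dsplit: "Dall = DJ + DJc"
  proof -
    have "D j = (\<Sum>i\<in>J j. \<bar>dB i j\<bar>) + (\<Sum>i\<in>UNIV - J j. \<bar>dB i j\<bar>)" for j
      unfolding D_def by (metis add.commute finite subset_UNIV sum.subset_diff)
    thus ?thesis unfolding Dall_def DJ_def DJc_def by (simp add: sum.distrib)
  qed
  define X1 where "X1 j = (\<Sum>l\<in>UNIV. (\<Sum>i\<in>UNIV. xb i j * Xs i l) * dB l j)" for j
  define X2 where "X2 j = (\<Sum>i\<in>UNIV. xb i j * dT i j)" for j
  have xbmd: "(\<Sum>i\<in>UNIV. xb i j * md i j) = X1 j - X2 j" for j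
  proof -
    have "(\<Sum>i\<in>UNIV. xb i j * md i j) = (\<Sum>i\<in>UNIV. \<Sum>l\<in>UNIV. xb i j * Xs i l * dB l j) - X2 j"
      by (simp add: md_def X2_def dB_def dT_def right_diff_distrib sum_subtractf sum_distrib_left mult.assoc)
    also have "(\<Sum>i\<in>UNIV. \<Sum>l\<in>UNIV. xb i j * Xs i l * dB l j) = X1 j"
      unfolding X1_def by (subst sum.swap) (simp add: sum_distrib_right)
    finally show ?thesis .
  qed
  have X1b: "\<bar>X1 j\<bar> \<le> k * lam * gam * a j * D j" for j
  proof -
    have "\<bar>X1 j\<bar> \<le> (\<Sum>l\<in>UNIV. \<bar>(\<Sum>i\<in>UNIV. xb i j * Xs i l) * dB l j\<bar>)"
      unfolding X1_def by (rule sum_abs)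
    also have "\<dots> \<le> (\<Sum>l\<in>UNIV. k * lam * gam * a j * \<bar>dB l j\<bar>)"
    proof (rule sum_mono)
      fix l :: 'p
      show "\<bar>(\<Sum>i\<in>UNIV. xb i j * Xs i l) * dB l j\<bar> \<le> k * lam * gam * a j * \<bar>dB l j\<bar>"
      proof (cases "l = j")
        case True thus ?thesis by (simp add: dBjj)
      next
        case False
        thus ?thesis unfolding abs_mult by (intro mult_right_mono hA) auto
      qed
    qed
    also have "\<dots> = k * lam * gam * a j * D j" by (simp add: D_def sum_distrib_left)
    finally show ?thesis .
  qed
  have rowb: "(\<Sum>j\<in>UNIV. \<bar>xb i j / a j\<bar> * \<bar>dT i j\<bar>) \<le> k * lam * Lr i" for i
  proof -
    have "(\<Sum>j\<in>UNIV. \<bar>xb i j / a j\<bar> * \<bar>dT i j\<bar>) \<le> L2_set (\<lambda>j. xb i j / a j) UNIV * Lr i"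
      unfolding Lr_def by (rule L2_set_mult_ineq)
    also have "\<dots> \<le> k * lam * Lr i" by (rule mult_right_mono[OF hB Lr0])
    finally show ?thesis .
  qed
  have sumX2a: "(\<Sum>j\<in>UNIV. X2 j / a j) \<le> k * lam * DI"
  proof -
    have "(\<Sum>j\<in>UNIV. X2 j / a j) = (\<Sum>i\<in>UNIV. \<Sum>j\<in>UNIV. (xb i j / a j) * dT i j)"
      unfolding X2_def by (subst sum.swap) (simp add: sum_divide_distrib)
    also have "\<dots> = (\<Sum>i\<in>Iset. \<Sum>j\<in>UNIV. (xb i j / a j) * dT i j) + (\<Sum>i\<in>Oset. \<Sum>j\<in>UNIV. (xb i j / a j) * dT i j)"
      by (rule splitU[OF part])
    also have "(\<Sum>i\<in>Oset. \<Sum>j\<in>UNIV. (xb i j / a j) * dT i j) = 0" by (simp add: xbO)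
    also have "(\<Sum>i\<in>Iset. \<Sum>j\<in>UNIV. (xb i j / a j) * dT i j) \<le> (\<Sum>i\<in>Iset. k * lam * Lr i)"
    proof (rule sum_mono)
      fix i
      have "(\<Sum>j\<in>UNIV. (xb i j / a j) * dT i j) \<le> (\<Sum>j\<in>UNIV. \<bar>xb i j / a j\<bar> * \<bar>dT i j\<bar>)"
        by (rule sum_mono) (metis abs_ge_self abs_mult)
      thus "(\<Sum>j\<in>UNIV. (xb i j / a j) * dT i j) \<le> k * lam * Lr i" using rowb[of i] by linarith
    qed
    finally show ?thesis by (simp add: DI_def sum_distrib_left)
  qed
  have colb: "a j + (X1 j - X2 j) / a j \<le> L2_set (\<lambda>i. xb i j + md i j) UNIV" for j
  proof -
    have "(\<Sum>i\<in>UNIV. xb i j * (xb i j + md i j)) \<le> a j * L2_set (\<lambda>i. xb i j + md i j) UNIV"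
      unfolding a_def by (rule inner_le_L2)
    moreover have "(\<Sum>i\<in>UNIV. xb i j * (xb i j + md i j)) = (a j)\<^sup>2 + (X1 j - X2 j)"
    proof -
      have "(a j)\<^sup>2 = (\<Sum>i\<in>UNIV. xb i j * xb i j)" unfolding a_def L2_sq by (simp add: power2_eq_square)
      thus ?thesis by (simp add: distrib_left sum.distrib xbmd)
    qed
    ultimately have "(a j)\<^sup>2 + (X1 j - X2 j) \<le> a j * L2_set (\<lambda>i. xb i j + md i j) UNIV" by simp
    thus ?thesis using apos[of j] by (simp add: field_simps power2_eq_square)
  qed
  have lhs1: "(\<Sum>j\<in>UNIV. a j) - k * lam * gam * Dall - k * lam * DI
      \<le> (\<Sum>j\<in>UNIV. L2_set (\<lambda>i. xb i j + md i j) UNIV)"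
  proof -
    have "X1 j / a j \<ge> - (k * lam * gam * D j)" for j
    proof -
      have "\<bar>X1 j\<bar> / a j \<le> k * lam * gam * D j" using X1b[of j] apos[of j] by (simp add: field_simps)
      moreover have "- (\<bar>X1 j\<bar> / a j) \<le> X1 j / a j" using apos[of j]
        by (simp add: field_simps)
      ultimately show ?thesis by linarith
    qed
    hence "(\<Sum>j\<in>UNIV. - (k * lam * gam * D j)) \<le> (\<Sum>j\<in>UNIV. X1 j / a j)" by (rule sum_mono)
    hence "- (k * lam * gam * Dall) \<le> (\<Sum>j\<in>UNIV. X1 j / a j)"
      by (simp add: Dall_def sum_distrib_left sum_negf)
    moreover have "(\<Sum>j\<in>UNIV. a j + (X1 j - X2 j) / a j) \<le> (\<Sum>j\<in>UNIV. L2_set (\<lambda>i. xb i j + md i j) UNIV)"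
      by (rule sum_mono) (rule colb)
    moreover have "(\<Sum>j\<in>UNIV. a j + (X1 j - X2 j) / a j) = (\<Sum>j\<in>UNIV. a j) + (\<Sum>j\<in>UNIV. X1 j / a j) - (\<Sum>j\<in>UNIV. X2 j / a j)"
      by (simp add: sum.distrib sum_subtractf diff_divide_distrib)
    ultimately show ?thesis using sumX2a by linarith
  qed
  have pen1: "DI - DO \<le> (\<Sum>i\<in>UNIV. L2_set (Th i) UNIV) - (\<Sum>i\<in>UNIV. L2_set (Tb i) UNIV)"
  proof -
    have "(\<Sum>i\<in>UNIV. L2_set (Th i) UNIV - L2_set (Tb i) UNIV)
        = (\<Sum>i\<in>Iset. L2_set (Th i) UNIV - L2_set (Tb i) UNIV) + (\<Sum>i\<in>Oset. L2_set (Th i) UNIV - L2_set (Tb i) UNIV)"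
      by (rule splitU[OF part])
    moreover have "(\<Sum>i\<in>Iset. L2_set (Th i) UNIV - L2_set (Tb i) UNIV) = DI"
      unfolding DI_def Lr_def dT_def
      by (rule sum.cong) (auto simp: TbI L2_set_0' intro!: L2_set_cong)
    moreover have "- DO \<le> (\<Sum>i\<in>Oset. L2_set (Th i) UNIV - L2_set (Tb i) UNIV)"
    proof -
      have "- Lr i \<le> L2_set (Th i) UNIV - L2_set (Tb i) UNIV" for i
      proof -
        have "L2_set (\<lambda>j. Th i j + (- dT i j)) UNIV \<le> L2_set (Th i) UNIV + L2_set (\<lambda>j. - dT i j) UNIV"
          by (rule L2_set_triangle_ineq)
        moreover have "L2_set (\<lambda>j. Th i j + (- dT i j)) UNIV = L2_set (Tb i) UNIV"
          by (simp add: dT_def)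
        moreover have "L2_set (\<lambda>j. - dT i j) UNIV = Lr i" by (simp add: Lr_def L2_set_def)
        ultimately show ?thesis by linarith
      qed
      hence "(\<Sum>i\<in>Oset. - Lr i) \<le> (\<Sum>i\<in>Oset. L2_set (Th i) UNIV - L2_set (Tb i) UNIV)" by (rule sum_mono)
      thus ?thesis by (simp add: DO_def sum_negf)
    qed
    ultimately show ?thesis by (simp add: sum_subtractf)
  qed
  have pen2: "DJc - DJ \<le> (\<Sum>i\<in>UNIV. \<Sum>j\<in>UNIV. \<bar>Bh i j\<bar>) - (\<Sum>i\<in>UNIV. \<Sum>j\<in>UNIV. \<bar>Bs i j\<bar>)"
  proof -
    have "(\<Sum>i\<in>UNIV - J j. \<bar>dB i j\<bar>) - (\<Sum>i\<in>J j. \<bar>dB i j\<bar>) \<le> (\<Sum>i\<in>UNIV. \<bar>Bh i j\<bar> - \<bar>Bs i j\<bar>)" for j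
    proof -
      have "(\<Sum>i\<in>UNIV. \<bar>Bh i j\<bar> - \<bar>Bs i j\<bar>) = (\<Sum>i\<in>UNIV - J j. \<bar>Bh i j\<bar> - \<bar>Bs i j\<bar>) + (\<Sum>i\<in>J j. \<bar>Bh i j\<bar> - \<bar>Bs i j\<bar>)"
        by (rule sum.subset_diff) auto
      moreover have "(\<Sum>i\<in>UNIV - J j. \<bar>Bh i j\<bar> - \<bar>Bs i j\<bar>) = (\<Sum>i\<in>UNIV - J j. \<bar>dB i j\<bar>)"
        by (rule sum.cong) (auto simp: dB_def supp)
      moreover have "(\<Sum>i\<in>J j. - \<bar>dB i j\<bar>) \<le> (\<Sum>i\<in>J j. \<bar>Bh i j\<bar> - \<bar>Bs i j\<bar>)"
        by (rule sum_mono) (auto simp: dB_def abs_if)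
      ultimately show ?thesis by (simp add: sum_negf)
    qed
    hence "(\<Sum>j\<in>UNIV. (\<Sum>i\<in>UNIV - J j. \<bar>dB i j\<bar>) - (\<Sum>i\<in>J j. \<bar>dB i j\<bar>)) \<le> (\<Sum>j\<in>UNIV. \<Sum>i\<in>UNIV. \<bar>Bh i j\<bar> - \<bar>Bs i j\<bar>)"
      by (rule sum_mono)
    also have "\<dots> = (\<Sum>i\<in>UNIV. \<Sum>j\<in>UNIV. \<bar>Bh i j\<bar>) - (\<Sum>i\<in>UNIV. \<Sum>j\<in>UNIV. \<bar>Bs i j\<bar>)"
      by (subst sum.swap) (simp add: sum_subtractf)
    finally show ?thesis by (simp add: DJ_def DJc_def sum_subtractf)
  qed
  have cone0: "- (k * lam * gam * Dall) - k * lam * DI + lam * (DI - DO) + lam * gam * (DJc - DJ) \<le> 0"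
  proof -
    have "lam * (DI - DO) \<le> lam * ((\<Sum>i\<in>UNIV. L2_set (Th i) UNIV) - (\<Sum>i\<in>UNIV. L2_set (Tb i) UNIV))"
      by (rule mult_left_mono[OF pen1 lam0])
    moreover have "lam * gam * (DJc - DJ) \<le> lam * gam * ((\<Sum>i\<in>UNIV. \<Sum>j\<in>UNIV. \<bar>Bh i j\<bar>) - (\<Sum>i\<in>UNIV. \<Sum>j\<in>UNIV. \<bar>Bs i j\<bar>))"
      by (rule mult_left_mono[OF pen2]) (simp add: lam0 gam0)
    ultimately show ?thesis using minim lhs1 by (simp only: right_diff_distrib distrib_left mult.assoc)
  qed
  have cone: "lam * Tn \<le> lam * (1 + c) * S"
  proof -
    define q where "q = lam * gam * DJ"
    define r where "r = lam * gam * DJc"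
    define s where "s = lam * DI"
    define t where "t = lam * DO"
    have t0: "0 \<le> t" by (simp add: t_def lam0 DO0)
    have e1: "(1 - k) * (r + s) \<le> (1 + k) * q + t"
      using cone0 unfolding Dsplit q_def r_def s_def t_def by (simp add: algebra_simps)
    have "(c + 1) * ((1 - k) * (r + s)) \<le> (c + 1) * ((1 + k) * q + t)"
      by (rule mult_left_mono[OF e1]) (use c1 in simp)
    moreover have "(c + 1) * (1 - k) = 2" "(c + 1) * (1 + k) = 2 * c"
      using c1 by (simp_all add: k_def field_simps)
    moreover have "(c + 1) * ((1 - k) * (r + s)) = ((c + 1) * (1 - k)) * (r + s)" by (simp only: mult.assoc)
    moreover have "(c + 1) * ((1 + k) * q + t) = ((c + 1) * (1 + k)) * q + (c + 1) * t" by (simp add: algebra_simps)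
    ultimately have "2 * (r + s) \<le> 2 * c * q + (c + 1) * t" by simp
    moreover have "(c + 1) * t \<le> 2 * c * t" using c1 t0 by (intro mult_right_mono) auto
    ultimately have "r + s \<le> c * q + c * t" by (simp add: algebra_simps)
    thus ?thesis unfolding Tn_def S_def Dsplit q_def r_def s_def t_def by (simp add: algebra_simps)
  qed
  define W where "W j = (\<Sum>i\<in>UNIV. V i j * dT i j)" for j
  have VW: "(\<Sum>j\<in>UNIV. a j * \<bar>W j\<bar>) \<le> A * (DI + DO)" and VW1: "(\<Sum>j\<in>UNIV. \<bar>W j\<bar>) \<le> DI + DO"
  proof -
    have w: "\<bar>W j\<bar> \<le> (\<Sum>i\<in>UNIV. \<bar>V i j\<bar> * \<bar>dT i j\<bar>)" for j
      unfolding W_def using sum_abs[of "\<lambda>i. V i j * dT i j" UNIV] by (simp add: abs_mult)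
    have sw: "(\<Sum>j\<in>UNIV. \<Sum>i\<in>UNIV. \<bar>V i j\<bar> * \<bar>dT i j\<bar>) \<le> DI + DO"
    proof -
      have "(\<Sum>j\<in>UNIV. \<Sum>i\<in>UNIV. \<bar>V i j\<bar> * \<bar>dT i j\<bar>) = (\<Sum>i\<in>UNIV. \<Sum>j\<in>UNIV. \<bar>V i j\<bar> * \<bar>dT i j\<bar>)"
        by (rule sum.swap)
      also have "\<dots> \<le> (\<Sum>i\<in>UNIV. Lr i)"
      proof (rule sum_mono)
        fix i
        have "(\<Sum>j\<in>UNIV. \<bar>V i j\<bar> * \<bar>dT i j\<bar>) \<le> L2_set (V i) UNIV * Lr i"
          unfolding Lr_def by (rule L2_set_mult_ineq)
        also have "\<dots> \<le> Lr i" using mult_right_mono[OF Vrows[of i] Lr0[of i]] by simp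
        finally show "(\<Sum>j\<in>UNIV. \<bar>V i j\<bar> * \<bar>dT i j\<bar>) \<le> Lr i" .
      qed
      finally show ?thesis using LrU by simp
    qed
    have "(\<Sum>j\<in>UNIV. \<bar>W j\<bar>) \<le> (\<Sum>j\<in>UNIV. \<Sum>i\<in>UNIV. \<bar>V i j\<bar> * \<bar>dT i j\<bar>)" by (rule sum_mono) (rule w)
    thus "(\<Sum>j\<in>UNIV. \<bar>W j\<bar>) \<le> DI + DO" using sw by linarith
    have "(\<Sum>j\<in>UNIV. a j * \<bar>W j\<bar>) \<le> (\<Sum>j\<in>UNIV. A * \<bar>W j\<bar>)"
      by (rule sum_mono) (rule mult_right_mono[OF aA], simp)
    also have "\<dots> \<le> A * (DI + DO)"
      using mult_left_mono[OF \<open>(\<Sum>j\<in>UNIV. \<bar>W j\<bar>) \<le> DI + DO\<close> A0] by (simp add: sum_distrib_left)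
    finally show "(\<Sum>j\<in>UNIV. a j * \<bar>W j\<bar>) \<le> A * (DI + DO)" .
  qed
  have sX2: "(\<Sum>j\<in>UNIV. X2 j) \<le> k * lam * A * (DI + DO)"
  proof -
    have "(\<Sum>j\<in>UNIV. X2 j) = (\<Sum>i\<in>UNIV. \<Sum>j\<in>UNIV. xb i j * dT i j)"
      unfolding X2_def by (rule sum.swap)
    also have "\<dots> \<le> (\<Sum>i\<in>UNIV. k * lam * A * Lr i)"
    proof (rule sum_mono)
      fix i
      have "(\<Sum>j\<in>UNIV. xb i j * dT i j) \<le> (\<Sum>j\<in>UNIV. A * (\<bar>xb i j / a j\<bar> * \<bar>dT i j\<bar>))"
      proof (rule sum_mono)
        fix j
        have "xb i j * dT i j = (xb i j / a j) * (a j * dT i j)" using apos[of j] by simp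
        also have "\<dots> \<le> \<bar>xb i j / a j\<bar> * (a j * \<bar>dT i j\<bar>)"
          using a0[of j] by (simp add: abs_mult) (metis abs_ge_self abs_mult)
        also have "\<dots> \<le> \<bar>xb i j / a j\<bar> * (A * \<bar>dT i j\<bar>)"
          by (intro mult_left_mono mult_right_mono aA) auto
        finally show "xb i j * dT i j \<le> A * (\<bar>xb i j / a j\<bar> * \<bar>dT i j\<bar>)" by (simp add: algebra_simps)
      qed
      also have "\<dots> \<le> A * (k * lam * Lr i)" 
        unfolding sum_distrib_left[symmetric] by (rule mult_left_mono[OF rowb A0])
      finally show "(\<Sum>j\<in>UNIV. xb i j * dT i j) \<le> k * lam * A * Lr i" by (simp add: algebra_simps)
    qed
    also have "\<dots> = k * lam * A * (DI + DO)" by (simp add: sum_distrib_left[symmetric] LrU)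
    finally show ?thesis .
  qed
  have Bd: "a j * ((\<Sum>i\<in>UNIV - {j}. \<bar>Bs i j\<bar>) - (\<Sum>i\<in>UNIV - {j}. \<bar>Bh i j\<bar>)) \<le> A * D j" for j
  proof -
    have "(\<Sum>i\<in>UNIV - {j}. \<bar>Bs i j\<bar>) - (\<Sum>i\<in>UNIV - {j}. \<bar>Bh i j\<bar>) \<le> (\<Sum>i\<in>UNIV - {j}. \<bar>dB i j\<bar>)"
      unfolding sum_subtractf[symmetric] by (rule sum_mono) (auto simp: dB_def abs_if)
    also have "\<dots> \<le> D j" unfolding D_def by (rule sum_mono2) auto
    finally have "(\<Sum>i\<in>UNIV - {j}. \<bar>Bs i j\<bar>) - (\<Sum>i\<in>UNIV - {j}. \<bar>Bh i j\<bar>) \<le> D j" .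
    hence "a j * ((\<Sum>i\<in>UNIV - {j}. \<bar>Bs i j\<bar>) - (\<Sum>i\<in>UNIV - {j}. \<bar>Bh i j\<bar>)) \<le> a j * D j"
      by (rule mult_left_mono[OF _ a0])
    also have "\<dots> \<le> A * D j" by (rule mult_right_mono[OF aA D0])
    finally show ?thesis .
  qed
  have quad: "(\<Sum>j\<in>UNIV. (gam * D j + \<bar>W j\<bar>)\<^sup>2) \<le> Tn\<^sup>2"
  proof -
    have "(\<Sum>j\<in>UNIV. (gam * D j + \<bar>W j\<bar>)\<^sup>2) \<le> (\<Sum>j\<in>UNIV. gam * D j + \<bar>W j\<bar>)\<^sup>2"
      by (rule sum_sq_le_sq_sum) (simp add: gam0 D0)
    also have "\<dots> \<le> Tn\<^sup>2"
    proof (rule power_mono)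
      show "0 \<le> (\<Sum>j\<in>UNIV. gam * D j + \<bar>W j\<bar>)" by (intro sum_nonneg) (simp add: gam0 D0)
      show "(\<Sum>j\<in>UNIV. gam * D j + \<bar>W j\<bar>) \<le> Tn"
        using VW1 by (simp add: sum.distrib Tn_def Dall_def sum_distrib_left)
    qed
    finally show ?thesis .
  qed
  have perj: "(L2_set (\<lambda>i. md i j) UNIV)\<^sup>2 \<le>
       2 * (k * lam * gam * A * D j) + 2 * X2 j + 2 * lam * (a j * \<bar>W j\<bar>) + 2 * lam * gam * (A * D j)
       + lam\<^sup>2 * (gam * D j + \<bar>W j\<bar>)\<^sup>2" for j
  proof -
    have "- X1 j \<le> k * lam * gam * A * D j"
    proof -
      have "k * lam * gam * a j * D j \<le> k * lam * gam * A * D j"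
        using k0 lam0 gam0 D0[of j] aA[of j] by (intro mult_right_mono mult_left_mono) auto
      thus ?thesis using X1b[of j] by linarith
    qed
    moreover have "- (lam * a j * W j) \<le> lam * (a j * \<bar>W j\<bar>)"
      proof -
      have "- W j \<le> \<bar>W j\<bar>" by simp
      hence "lam * a j * (- W j) \<le> lam * a j * \<bar>W j\<bar>" by (rule mult_left_mono) (simp add: lam0 a0)
      thus ?thesis by simp
    qed
    moreover have "lam * gam * (a j * ((\<Sum>i\<in>UNIV - {j}. \<bar>Bs i j\<bar>) - (\<Sum>i\<in>UNIV - {j}. \<bar>Bh i j\<bar>))) \<le> lam * gam * (A * D j)"
      by (rule mult_left_mono[OF Bd]) (simp add: lam0 gam0)
    moreover have "(\<Sum>i\<in>UNIV. V i j * (Th i j - Tb i j)) = W j" by (simp add: W_def dT_def)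
    moreover have "(\<Sum>i\<in>UNIV. \<bar>Bh i j - Bs i j\<bar>) = D j" by (simp add: D_def dB_def)
    moreover note Vineq[of j] xbmd[of j]
    ultimately show ?thesis by (simp only: mult.assoc) (smt (verit))
  qed
  have "(\<Sum>j\<in>UNIV. (L2_set (\<lambda>i. md i j) UNIV)\<^sup>2) \<le> (\<Sum>j\<in>UNIV.
       2 * (k * lam * gam * A * D j) + 2 * X2 j + 2 * lam * (a j * \<bar>W j\<bar>) + 2 * lam * gam * (A * D j)
       + lam\<^sup>2 * (gam * D j + \<bar>W j\<bar>)\<^sup>2)" by (rule sum_mono) (rule perj)
  also have "\<dots> = 2 * (k * lam * gam * A * Dall) + 2 * (\<Sum>j\<in>UNIV. X2 j) + 2 * lam * (\<Sum>j\<in>UNIV. a j * \<bar>W j\<bar>)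
      + 2 * lam * gam * (A * Dall) + lam\<^sup>2 * (\<Sum>j\<in>UNIV. (gam * D j + \<bar>W j\<bar>)\<^sup>2)"
    by (simp add: sum.distrib sum_distrib_left Dall_def)
  also have "\<dots> \<le> 2 * (k * lam * gam * A * Dall) + 2 * (k * lam * A * (DI + DO)) + 2 * lam * (A * (DI + DO))
      + 2 * lam * gam * (A * Dall) + lam\<^sup>2 * Tn\<^sup>2"
    using sX2 mult_left_mono[OF VW, of "2*lam"] mult_left_mono[OF quad, of "lam\<^sup>2"] lam0 by simp
  also have "\<dots> = 2 * A * (1 + k) * (lam * Tn) + (lam * Tn)\<^sup>2"
    by (simp add: Tn_def algebra_simps power2_eq_square)
  also have "\<dots> \<le> 2 * A * (1 + k) * (lam * (1 + c) * S) + (lam * (1 + c) * S)\<^sup>2"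
  proof -
    have "0 \<le> lam * Tn" using lam0 gam0 Dall0 DI0 DO0 by (simp add: Tn_def)
    hence "(lam * Tn)\<^sup>2 \<le> (lam * (1 + c) * S)\<^sup>2" using cone by (intro power_mono) auto
    moreover have "2 * A * (1 + k) * (lam * Tn) \<le> 2 * A * (1 + k) * (lam * (1 + c) * S)"
      using cone A0 k0 by (intro mult_left_mono) auto
    ultimately show ?thesis by linarith
  qed
  also have "\<dots> = 4 * lam * c * A * S + lam\<^sup>2 * (1 + c)\<^sup>2 * S\<^sup>2"
  proof -
    have "(1 + k) * (1 + c) = 2 * c" using c1 by (simp add: k_def field_simps)
    hence "2 * A * (1 + k) * (lam * (1 + c) * S) = 2 * A * lam * S * ((1 + k) * (1 + c))" by (simp add: algebra_simps)
    also have "\<dots> = 4 * lam * c * A * S" using \<open>(1 + k) * (1 + c) = 2 * c\<close> by simp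
    finally show ?thesis by (simp add: power_mult_distrib)
  qed
  finally show ?thesis unfolding S_def DJ_def DO_def Lr_def dB_def dT_def .
qed


lemma norm_vec_L2: "norm (x::real^'n) = L2_set (\<lambda>i. x $ i) UNIV"
  unfolding norm_vec_def L2_set_def by simp

lemma inner_vec_sum: "(x::real^'n) \<bullet> y = (\<Sum>i\<in>UNIV. x $ i * y $ i)"
  unfolding inner_vec_def by simp

lemma column_nth: "column j A $ i = A $ i $ j"
  unfolding column_def by simp

lemma mm_nth: "(A ** B) $ i $ j = (\<Sum>k\<in>UNIV. A $ i $ k * B $ k $ j)"
  unfolding matrix_matrix_mult_def by simp

lemma MD_nth:
  fixes A :: "real^'p::finite^'n::finite" and DB :: "real^'p^'p" and DT :: "real^'p^'n"
  shows "(Mmat A ** stack DB DT) $ i $ j = (\<Sum>l\<in>UNIV. A $ i $ l * DB $ l $ j) - DT $ i $ j"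
proof -
  have "(Mmat A ** stack DB DT) $ i $ j = (\<Sum>k\<in>(UNIV::'p set) <+> (UNIV::'n set). Mmat A $ i $ k * stack DB DT $ k $ j)"
    by (simp add: mm_nth)
  also have "\<dots> = (\<Sum>l\<in>UNIV. A $ i $ l * DB $ l $ j) + (\<Sum>l\<in>UNIV. (if l = i then -1 else 0) * DT $ l $ j)"
    by (subst sum.Plus) (simp_all add: Mmat_def stack_def o_def)
  also have "(\<Sum>l\<in>UNIV. (if l = i then -1 else 0) * DT $ l $ j) = - DT $ i $ j"
  proof -
    have "(\<lambda>l. (if l = i then -1 else 0) * DT $ l $ j) = (\<lambda>l. if l = i then - DT $ i $ j else 0)" by auto
    thus ?thesis by (simp only: sum.delta finite UNIV_I if_True)
  qed
  finally show ?thesis by simp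
qed

lemma sqrt_sum_scale:
  "sqrt (\<Sum>i\<in>A. (s * f i)\<^sup>2) = \<bar>s\<bar> * sqrt (\<Sum>i\<in>A. (f i)\<^sup>2)"
  by (simp add: power_mult_distrib sum_distrib_left[symmetric] real_sqrt_mult)

theorem mainTheorem18:
  fixes Y E :: "real^'p^'n" and Sigma :: "real^'p^'p" and M_E :: real
    and Iset Oset :: "'n set" and lam gam c :: real
    and Bh :: "real^'p^'p" and Th :: "real^'p^'n"
    and JJ :: "'p \<Rightarrow> 'p set" and V :: "real^'p^'n"
  assumes Sigma_pd: "pos_def_mat Sigma"
    and partition: "Iset \<union> Oset = UNIV" "Iset \<inter> Oset = {}"
    and E_zero_I: "\<forall>i\<in>Iset. E $ i = 0"
    and E_bound: "\<exists>R. is_inv_sqrt R Sigma \<and> (\<forall>i. norm ((E ** R) $ i) \<le> M_E * sqrt (real CARD('p)))"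
    and lam_nn: "lam \<ge> 0" and gam_nn: "gam \<ge> 0"
    and Bh_diag: "\<forall>j. Bh $ j $ j = 1"
    and minimizer: "\<forall>B T. (\<forall>j. B $ j $ j = 1) \<longrightarrow>
        Fobj (Y + E) lam gam Bh Th \<le> Fobj (Y + E) lam gam B T"
    and JJ_supp: "\<forall>i j. i \<notin> JJ j \<longrightarrow> Bstar Sigma $ i $ j = 0"
    and eps_I_nz: "\<forall>j. \<exists>i\<in>Iset. eps (Y + E) E Sigma $ i $ j \<noteq> 0"
    and c_gt: "c > 1"
    and lam_gam_bound: "lam * gam \<ge> (c + 1) / (c - 1) *
        (MAX j\<in>UNIV. Max (insert 0 {\<bar>\<Sum>i\<in>Iset. Xn (Y + E) $ i $ k * eps (Y + E) E Sigma $ i $ j\<bar> | k. k \<noteq> j})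
           / sqrt (\<Sum>i\<in>Iset. (eps (Y + E) E Sigma $ i $ j)\<^sup>2))"
    and lam_bound: "lam \<ge> (c + 1) / (c - 1) *
        (MAX i\<in>UNIV. sqrt (\<Sum>j\<in>UNIV. (eps (Y + E) E Sigma $ i $ j)\<^sup>2
                                 / (\<Sum>i'\<in>Iset. (eps (Y + E) E Sigma $ i' $ j)\<^sup>2)))"
    and V_rows: "\<forall>i. norm (V $ i) \<le> 1"
    and V_ineq: "\<forall>j.
        let X = Y + E; \<xi> = xi X E Sigma; \<xi>bar = \<xi> - rows_on Oset \<xi>;
            DB = Bh - Bstar Sigma; DT = Th - (Theta_star E Sigma + rows_on Oset \<xi>);
            MD = Mmat (Xn X) ** stack DB DT
        in (norm (column j MD))\<^sup>2
           \<le> - 2 * (column j \<xi>bar \<bullet> column j MD)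
             - 2 * lam * norm (column j \<xi>bar) * (column j V \<bullet> column j DT)
             + 2 * lam * gam * norm (column j \<xi>bar)
                 * ((\<Sum>i\<in>UNIV - {j}. \<bar>Bstar Sigma $ i $ j\<bar>) - (\<Sum>i\<in>UNIV - {j}. \<bar>Bh $ i $ j\<bar>))
             + lam\<^sup>2 * (gam * (\<Sum>i\<in>UNIV. \<bar>DB $ i $ j\<bar>) + \<bar>column j V \<bullet> column j DT\<bar>)\<^sup>2"
  shows "let X = Y + E; \<xi> = xi X E Sigma;
             DB = Bh - Bstar Sigma; DT = Th - (Theta_star E Sigma + rows_on Oset \<xi>);
             MD = Mmat (Xn X) ** stack DB DT;
             S = gam * (\<Sum>j\<in>UNIV. \<Sum>i\<in>JJ j. \<bar>DB $ i $ j\<bar>) + (\<Sum>i\<in>Oset. norm (DT $ i))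
         in (frob MD)\<^sup>2
            \<le> 4 * lam * c * (MAX j\<in>UNIV. sqrt (\<Sum>i\<in>Iset. (\<xi> $ i $ j)\<^sup>2)) * S
              + lam\<^sup>2 * (1 + c)\<^sup>2 * S\<^sup>2"
proof -
  define X where "X = Y + E"
  define xx where "xx = xi X E Sigma"
  define Bs where "Bs = Bstar Sigma"
  define Ob where "Ob = Theta_star E Sigma + rows_on Oset xx"
  define xb where "xb = xx - rows_on Oset xx"
  define DB where "DB = Bh - Bs"
  define DT where "DT = Th - Ob"
  define Xs where "Xs = Xn X"
  define MD where "MD = Mmat Xs ** stack DB DT"
  define ep where "ep = eps X E Sigma"
  define om where "om = matrix_inv Sigma"
  define sj where "sj j = sqrt (real CARD('n)) * sqrt (om $ j $ j)" for j
  define a where "a j = L2_set (\<lambda>i. xb $ i $ j) UNIV" for j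
  define A where "A = (MAX j\<in>UNIV. sqrt (\<Sum>i\<in>Iset. (xx $ i $ j)\<^sup>2))"
  define k where "k = (c - 1) / (c + 1)"
  have k0: "0 < k" using c_gt by (simp add: k_def)
  have kaux: "\<And>M L. L \<ge> 1 / k * M \<Longrightarrow> M \<le> k * L" using k0 by (simp add: field_simps)
  have kinv: "(c + 1) / (c - 1) = 1 / k" using c_gt by (simp add: k_def)
  have ep_eq: "ep $ i $ j = sj j * xx $ i $ j" for i j
    by (simp add: ep_def eps_def sj_def om_def xx_def)
  have xb_eq: "xb $ i $ j = (if i \<in> Oset then 0 else xx $ i $ j)" for i j
    by (simp add: xb_def rows_on_def)
  have IO: "i \<in> Iset \<Longrightarrow> i \<notin> Oset" for i using partition by blast
  have nz: "sj j \<noteq> 0 \<and> (\<exists>i\<in>Iset. xx $ i $ j \<noteq> 0)" for j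
  proof -
    obtain i where "i \<in> Iset" "eps (Y + E) E Sigma $ i $ j \<noteq> 0" using eps_I_nz by blast
    hence "i \<in> Iset" "ep $ i $ j \<noteq> 0" by (simp_all add: ep_def X_def)
    thus ?thesis unfolding ep_eq by auto
  qed
  have om_nz: "om $ j $ j \<noteq> 0" for j using nz[of j] by (auto simp: sj_def)
  have Bs_diag: "Bs $ j $ j = 1" for j using om_nz[of j] by (simp add: Bs_def Bstar_def om_def)
  have a_I: "a j = sqrt (\<Sum>i\<in>Iset. (xx $ i $ j)\<^sup>2)" for j
  proof -
    have "(\<Sum>i\<in>UNIV. (xb $ i $ j)\<^sup>2) = (\<Sum>i\<in>Iset. (xb $ i $ j)\<^sup>2) + (\<Sum>i\<in>Oset. (xb $ i $ j)\<^sup>2)"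
      by (rule splitU[OF partition])
    also have "(\<Sum>i\<in>Oset. (xb $ i $ j)\<^sup>2) = 0" by (simp add: xb_eq)
    also have "(\<Sum>i\<in>Iset. (xb $ i $ j)\<^sup>2) = (\<Sum>i\<in>Iset. (xx $ i $ j)\<^sup>2)"
      by (rule sum.cong) (auto simp: xb_eq IO)
    finally show ?thesis by (simp add: a_def L2_set_def)
  qed
  have apos: "a j > 0" for j
  proof -
    obtain i where i: "i \<in> Iset" "xx $ i $ j \<noteq> 0" using nz[of j] by blast
    have "(xx $ i $ j)\<^sup>2 > 0" using i by simp
    moreover have "(xx $ i $ j)\<^sup>2 \<le> (\<Sum>i\<in>Iset. (xx $ i $ j)\<^sup>2)"
      by (rule member_le_sum) (use i in auto)
    ultimately have "0 < (\<Sum>i\<in>Iset. (xx $ i $ j)\<^sup>2)" by linarith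
    thus ?thesis unfolding a_I by simp
  qed
  have aA: "a j \<le> A" for j unfolding a_I A_def by (rule Max_ge) auto
  have lgb: "lam * gam \<ge> 1 / k *
        (MAX j\<in>UNIV. Max (insert 0 {\<bar>\<Sum>i\<in>Iset. Xs $ i $ l * ep $ i $ j\<bar> | l. l \<noteq> j})
           / sqrt (\<Sum>i\<in>Iset. (ep $ i $ j)\<^sup>2))"
    using lam_gam_bound unfolding kinv by (simp add: Xs_def ep_def X_def)
  have lb: "lam \<ge> 1 / k *
        (MAX i\<in>UNIV. sqrt (\<Sum>j\<in>UNIV. (ep $ i $ j)\<^sup>2 / (\<Sum>i'\<in>Iset. (ep $ i' $ j)\<^sup>2)))"
    using lam_bound unfolding kinv by (simp add: ep_def X_def)
  have sqep: "sqrt (\<Sum>i\<in>Iset. (ep $ i $ j)\<^sup>2) = \<bar>sj j\<bar> * a j" for j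
    unfolding ep_eq a_I by (rule sqrt_sum_scale)
  have hA: "\<bar>\<Sum>i\<in>UNIV. xb $ i $ j * Xs $ i $ l\<bar> \<le> k * lam * gam * a j" if lj: "l \<noteq> j" for j l
  proof -
    define g where "g = \<bar>\<Sum>i\<in>Iset. Xs $ i $ l * xx $ i $ j\<bar>"
    have "(\<Sum>i\<in>UNIV. xb $ i $ j * Xs $ i $ l) = (\<Sum>i\<in>Iset. xb $ i $ j * Xs $ i $ l) + (\<Sum>i\<in>Oset. xb $ i $ j * Xs $ i $ l)"
      by (rule splitU[OF partition])
    also have "(\<Sum>i\<in>Oset. xb $ i $ j * Xs $ i $ l) = 0" by (simp add: xb_eq)
    also have "(\<Sum>i\<in>Iset. xb $ i $ j * Xs $ i $ l) = (\<Sum>i\<in>Iset. Xs $ i $ l * xx $ i $ j)"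
      by (rule sum.cong) (auto simp: xb_eq IO)
    finally have e1: "\<bar>\<Sum>i\<in>UNIV. xb $ i $ j * Xs $ i $ l\<bar> = g" by (simp add: g_def)
    have e2: "\<bar>\<Sum>i\<in>Iset. Xs $ i $ l * ep $ i $ j\<bar> = \<bar>sj j\<bar> * g"
    proof -
      have "(\<Sum>i\<in>Iset. Xs $ i $ l * (sj j * xx $ i $ j)) = sj j * (\<Sum>i\<in>Iset. Xs $ i $ l * xx $ i $ j)"
        by (simp add: sum_distrib_left mult.left_commute)
      thus ?thesis unfolding g_def ep_eq by (simp add: abs_mult)
    qed
    have "\<bar>sj j\<bar> * g \<le> Max (insert 0 {\<bar>\<Sum>i\<in>Iset. Xs $ i $ l * ep $ i $ j\<bar> | l. l \<noteq> j})"
      unfolding e2[symmetric] by (rule Max_ge) (use lj in auto)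
    hence "\<bar>sj j\<bar> * g / (\<bar>sj j\<bar> * a j) \<le> Max (insert 0 {\<bar>\<Sum>i\<in>Iset. Xs $ i $ l * ep $ i $ j\<bar> | l. l \<noteq> j}) / sqrt (\<Sum>i\<in>Iset. (ep $ i $ j)\<^sup>2)"
      unfolding sqep using apos[of j] nz[of j] by (intro divide_right_mono) auto
    also have "\<dots> \<le> (MAX j\<in>UNIV. Max (insert 0 {\<bar>\<Sum>i\<in>Iset. Xs $ i $ l * ep $ i $ j\<bar> | l. l \<noteq> j})
           / sqrt (\<Sum>i\<in>Iset. (ep $ i $ j)\<^sup>2))" by (rule Max_ge) auto
    also have "\<dots> \<le> k * (lam * gam)" by (rule kaux[OF lgb])
    finally have "g / a j \<le> k * (lam * gam)"
      using nz[of j] by simp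
    thus ?thesis unfolding e1 using apos[of j] by (simp add: field_simps)
  qed
  have hB: "L2_set (\<lambda>j. xb $ i $ j / a j) UNIV \<le> k * lam" for i
  proof (cases "i \<in> Oset")
    case True
    have "lam \<ge> 0" by (rule lam_nn)
    thus ?thesis using True k0 by (simp add: xb_eq L2_set_0')
  next
    case False
    have e: "(ep $ i $ j)\<^sup>2 / (\<Sum>i'\<in>Iset. (ep $ i' $ j)\<^sup>2) = (xb $ i $ j / a j)\<^sup>2" for j
    proof -
      have "(\<Sum>i'\<in>Iset. (ep $ i' $ j)\<^sup>2) = (sj j)\<^sup>2 * (a j)\<^sup>2"
      proof -
        have "(sqrt (\<Sum>i'\<in>Iset. (ep $ i' $ j)\<^sup>2))\<^sup>2 = (\<bar>sj j\<bar> * a j)\<^sup>2" using sqep[of j] by simp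
        thus ?thesis by (simp add: power_mult_distrib sum_nonneg)
      qed
      thus ?thesis using False nz[of j] apos[of j] by (simp add: ep_eq xb_eq power_divide power_mult_distrib)
    qed
    have "L2_set (\<lambda>j. xb $ i $ j / a j) UNIV = sqrt (\<Sum>j\<in>UNIV. (ep $ i $ j)\<^sup>2 / (\<Sum>i'\<in>Iset. (ep $ i' $ j)\<^sup>2))"
      by (simp add: e L2_set_def)
    also have "\<dots> \<le> (MAX i\<in>UNIV. sqrt (\<Sum>j\<in>UNIV. (ep $ i $ j)\<^sup>2 / (\<Sum>i'\<in>Iset. (ep $ i' $ j)\<^sup>2)))"
      by (rule Max_ge) auto
    also have "\<dots> \<le> k * lam" by (rule kaux[OF lb])
    finally show ?thesis .
  qed
  have md: "MD $ i $ j = (\<Sum>l\<in>UNIV. Xs $ i $ l * (Bh $ l $ j - Bs $ l $ j)) - (Th $ i $ j - Ob $ i $ j)" for i j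
    by (simp add: MD_def MD_nth DB_def DT_def)
  have ent1: "(Xs ** Bh - Th) $ i $ j = xb $ i $ j + MD $ i $ j" for i j
  proof -
    have "(\<Sum>l\<in>UNIV. Xs $ i $ l * (Bh $ l $ j - Bs $ l $ j)) = (Xs ** Bh) $ i $ j - (Xs ** Bs) $ i $ j"
      by (simp add: mm_nth right_diff_distrib sum_subtractf)
    moreover have "xx $ i $ j = (Xs ** Bs) $ i $ j - Theta_star E Sigma $ i $ j"
      by (simp add: xx_def xi_def Xs_def Bs_def)
    ultimately show ?thesis by (simp add: md xb_def Ob_def)
  qed
  have ent2: "(Xs ** Bs - Ob) $ i $ j = xb $ i $ j" for i j
    by (simp add: xb_def xx_def xi_def Ob_def Xs_def Bs_def)
  have minim: "(\<Sum>j\<in>UNIV. L2_set (\<lambda>i. xb $ i $ j + MD $ i $ j) UNIV)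
       + lam * ((\<Sum>i\<in>UNIV. L2_set (\<lambda>j. Th $ i $ j) UNIV) + gam * (\<Sum>i\<in>UNIV. \<Sum>j\<in>UNIV. \<bar>Bh $ i $ j\<bar>))
      \<le> (\<Sum>j\<in>UNIV. a j)
       + lam * ((\<Sum>i\<in>UNIV. L2_set (\<lambda>j. Ob $ i $ j) UNIV) + gam * (\<Sum>i\<in>UNIV. \<Sum>j\<in>UNIV. \<bar>Bs $ i $ j\<bar>))"
  proof -
    have "Fobj (Y + E) lam gam Bh Th \<le> Fobj (Y + E) lam gam Bs Ob"
      using minimizer Bs_diag by blast
    moreover have "norm (column j (Xs ** Bh - Th)) = L2_set (\<lambda>i. xb $ i $ j + MD $ i $ j) UNIV" for j
      by (simp only: norm_vec_L2 column_nth ent1)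
    moreover have "norm (column j (Xs ** Bs - Ob)) = a j" for j
      by (simp only: norm_vec_L2 column_nth ent2 a_def)
    ultimately show ?thesis unfolding Fobj_def X_def[symmetric] Xs_def[symmetric]
      by (simp only: norm_vec_L2)
  qed
  have Vrows: "L2_set (\<lambda>j. V $ i $ j) UNIV \<le> 1" for i using V_rows norm_vec_L2 by metis
  have Vineq: "(L2_set (\<lambda>i. MD $ i $ j) UNIV)\<^sup>2 \<le>
        - 2 * (\<Sum>i\<in>UNIV. xb $ i $ j * MD $ i $ j)
        - 2 * lam * a j * (\<Sum>i\<in>UNIV. V $ i $ j * (Th $ i $ j - Ob $ i $ j))
        + 2 * lam * gam * a j * ((\<Sum>i\<in>UNIV - {j}. \<bar>Bs $ i $ j\<bar>) - (\<Sum>i\<in>UNIV - {j}. \<bar>Bh $ i $ j\<bar>))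
        + lam\<^sup>2 * (gam * (\<Sum>i\<in>UNIV. \<bar>Bh $ i $ j - Bs $ i $ j\<bar>) + \<bar>\<Sum>i\<in>UNIV. V $ i $ j * (Th $ i $ j - Ob $ i $ j)\<bar>)\<^sup>2" for j
  proof -
    have v: "\<forall>j. (norm (column j MD))\<^sup>2
           \<le> - 2 * (column j xb \<bullet> column j MD)
             - 2 * lam * norm (column j xb) * (column j V \<bullet> column j DT)
             + 2 * lam * gam * norm (column j xb)
                 * ((\<Sum>i\<in>UNIV - {j}. \<bar>Bs $ i $ j\<bar>) - (\<Sum>i\<in>UNIV - {j}. \<bar>Bh $ i $ j\<bar>))
             + lam\<^sup>2 * (gam * (\<Sum>i\<in>UNIV. \<bar>DB $ i $ j\<bar>) + \<bar>column j V \<bullet> column j DT\<bar>)\<^sup>2"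
      using V_ineq unfolding Let_def X_def[symmetric] xx_def[symmetric] Bs_def[symmetric]
        Ob_def[symmetric] xb_def[symmetric] DB_def[symmetric] DT_def[symmetric] Xs_def[symmetric] MD_def[symmetric] .
    show ?thesis using v[rule_format, of j]
      by (simp only: norm_vec_L2 column_nth inner_vec_sum a_def[symmetric] DB_def DT_def vector_minus_component)
  qed
  have main: "(\<Sum>j\<in>UNIV. (L2_set (\<lambda>i. MD $ i $ j) UNIV)\<^sup>2)
     \<le> 4 * lam * c * A * (gam * (\<Sum>j\<in>UNIV. \<Sum>i\<in>JJ j. \<bar>Bh $ i $ j - Bs $ i $ j\<bar>) + (\<Sum>i\<in>Oset. L2_set (\<lambda>j. Th $ i $ j - Ob $ i $ j) UNIV))
       + lam\<^sup>2 * (1 + c)\<^sup>2 * (gam * (\<Sum>j\<in>UNIV. \<Sum>i\<in>JJ j. \<bar>Bh $ i $ j - Bs $ i $ j\<bar>) + (\<Sum>i\<in>Oset. L2_set (\<lambda>j. Th $ i $ j - Ob $ i $ j) UNIV))\<^sup>2"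
  proof (rule abstract_main[where Xs = "\<lambda>i l. Xs $ i $ l" and Bh = "\<lambda>i j. Bh $ i $ j" and Bs = "\<lambda>i j. Bs $ i $ j"
        and Th = "\<lambda>i j. Th $ i $ j" and Tb = "\<lambda>i j. Ob $ i $ j" and xb = "\<lambda>i j. xb $ i $ j"
        and V = "\<lambda>i j. V $ i $ j" and md = "\<lambda>i j. MD $ i $ j" and Iset = Iset and Oset = Oset and J = JJ
        and k = k and a = a])
    show "Iset \<union> Oset = UNIV" "Iset \<inter> Oset = {}" by (rule partition)+
    show "\<And>i j. i \<in> Oset \<Longrightarrow> xb $ i $ j = 0" by (simp add: xb_eq)
    show "\<And>i j. i \<in> Iset \<Longrightarrow> Ob $ i $ j = 0"
      by (simp add: Ob_def Theta_star_def mm_nth rows_on_def E_zero_I IO)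
    show "\<And>j. Bh $ j $ j = 1" using Bh_diag by blast
    show "\<And>j. Bs $ j $ j = 1" by (rule Bs_diag)
    show "\<And>i j. i \<notin> JJ j \<Longrightarrow> Bs $ i $ j = 0" using JJ_supp by (simp add: Bs_def)
    show "\<And>j. a j = L2_set (\<lambda>i. xb $ i $ j) UNIV" by (simp add: a_def)
    show "\<And>j. a j > 0" by (rule apos)
    show "\<And>j. a j \<le> A" by (rule aA)
    show "c > 1" by (rule c_gt)
    show "k = (c - 1) / (c + 1)" by (rule k_def)
    show "lam \<ge> 0" "gam \<ge> 0" by (rule lam_nn, rule gam_nn)
    show "\<And>j l. l \<noteq> j \<Longrightarrow> \<bar>\<Sum>i\<in>UNIV. xb $ i $ j * Xs $ i $ l\<bar> \<le> k * lam * gam * a j" by (rule hA)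
    show "\<And>i. L2_set (\<lambda>j. xb $ i $ j / a j) UNIV \<le> k * lam" by (rule hB)
    show "\<And>i j. MD $ i $ j = (\<Sum>l\<in>UNIV. Xs $ i $ l * (Bh $ l $ j - Bs $ l $ j)) - (Th $ i $ j - Ob $ i $ j)" by (rule md)
    show "\<And>i. L2_set (\<lambda>j. V $ i $ j) UNIV \<le> 1" by (rule Vrows)
  qed (use minim Vineq in auto)
  have frob_eq: "(frob MD)\<^sup>2 = (\<Sum>j\<in>UNIV. (L2_set (\<lambda>i. MD $ i $ j) UNIV)\<^sup>2)"
    unfolding frob_def L2_sq by (simp add: sum_nonneg) (rule sum.swap)
  have S_eq: "gam * (\<Sum>j\<in>UNIV. \<Sum>i\<in>JJ j. \<bar>DB $ i $ j\<bar>) + (\<Sum>i\<in>Oset. norm (DT $ i))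
      = gam * (\<Sum>j\<in>UNIV. \<Sum>i\<in>JJ j. \<bar>Bh $ i $ j - Bs $ i $ j\<bar>) + (\<Sum>i\<in>Oset. L2_set (\<lambda>j. Th $ i $ j - Ob $ i $ j) UNIV)"
    by (simp add: DB_def DT_def norm_vec_L2)
  have A_eq: "A = (MAX j\<in>UNIV. sqrt (\<Sum>i\<in>Iset. (xx $ i $ j)\<^sup>2))" by (rule A_def)
  have fin: "(frob MD)\<^sup>2 \<le> 4 * lam * c * (MAX j\<in>UNIV. sqrt (\<Sum>i\<in>Iset. (xx $ i $ j)\<^sup>2))
        * (gam * (\<Sum>j\<in>UNIV. \<Sum>i\<in>JJ j. \<bar>DB $ i $ j\<bar>) + (\<Sum>i\<in>Oset. norm (DT $ i)))
      + lam\<^sup>2 * (1 + c)\<^sup>2 * (gam * (\<Sum>j\<in>UNIV. \<Sum>i\<in>JJ j. \<bar>DB $ i $ j\<bar>) + (\<Sum>i\<in>Oset. norm (DT $ i)))\<^sup>2"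
    unfolding S_eq frob_eq A_eq[symmetric] by (rule main)
  show ?thesis unfolding Let_def X_def[symmetric] xx_def[symmetric] Bs_def[symmetric]
        Ob_def[symmetric] DB_def[symmetric] DT_def[symmetric] Xs_def[symmetric] MD_def[symmetric]
    by (rule fin)
qed

end
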